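(* $(\Sigma^{\mathrm{mod}}_{\mathrm{ADF}}\setminus\{\emptyset\})\subseteq\Sigma^{\mathrm{prf}}_{\mathrm{ADF}}$.
   Context: Let $A$ be a finite set of statements; an interpretation is $v:A\to\{\mathbf{t},\mathbf{f},\mathbf{u}\}$. The information ordering is $\mathbf{u}<_i\mathbf{t}$, $\mathbf{u}<_i\mathbf{f}$, extended pointwise; $[v]_2$ is the set of two-valued interpretations extending $v$. An ADF is $D=(A,L,C)$ with an acceptance formula $\varphi_a$ over the parents of each statement $a$. $\Gamma_D(v)(a)$ is the greatest lower bound w.r.t. $\leq_i$ (consensus: $\mathbf{t}$ if all $\mathbf{t}$, $\mathbf{f}$ if all $\mathbf{f}$, else $\mathbf{u}$) of $\{w(\varphi_a)\mid w\in[v]_2\}$. $v$ is admissible iff $v\leq_i\Gamma_D(v)$, preferred iff $\leq_i$-maximal admissible, a two-valued model iff two-valued and $\Gamma_D(v)=v$. The signature of ADFs under semantics $\sigma$ is $\Sigma^\sigma_{\mathrm{ADF}}=\{\sigma(D)\mid D \text{ an ADF over } A\}$, where $\mathrm{mod}(D)$ and $\mathrm{prf}(D)$ are the sets of two-valued models and preferred interpretations of $D$. *)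

theory Defs
  imports Main
begin

datatype tv = TT | FF | UU

datatype 'a form = Atom 'a | Top | Bot | Neg "'a form"
  | Conj "'a form" "'a form" | Disj "'a form" "'a form"

fun atoms :: "'a form \<Rightarrow> 'a set" where
  "atoms (Atom a) = {a}" | "atoms Top = {}" | "atoms Bot = {}"
| "atoms (Neg f) = atoms f" | "atoms (Conj f g) = atoms f \<union> atoms g"
| "atoms (Disj f g) = atoms f \<union> atoms g"

fun eval :: "('a \<Rightarrow> tv) \<Rightarrow> 'a form \<Rightarrow> tv" where
  "eval w (Atom a) = w a" | "eval w Top = TT" | "eval w Bot = FF"
| "eval w (Neg f) = (if eval w f = TT then FF else TT)"
| "eval w (Conj f g) = (if eval w f = TT \<and> eval w g = TT then TT else FF)"
| "eval w (Disj f g) = (if eval w f = TT \<or> eval w g = TT then TT else FF)"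

definition interp :: "'a set \<Rightarrow> ('a \<Rightarrow> tv) \<Rightarrow> bool" where
  "interp A v \<longleftrightarrow> (\<forall>a. a \<notin> A \<longrightarrow> v a = UU)"

definition two_valued :: "'a set \<Rightarrow> ('a \<Rightarrow> tv) \<Rightarrow> bool" where
  "two_valued A v \<longleftrightarrow> interp A v \<and> (\<forall>a\<in>A. v a \<noteq> UU)"

definition leq_i :: "('a \<Rightarrow> tv) \<Rightarrow> ('a \<Rightarrow> tv) \<Rightarrow> bool" where
  "leq_i v w \<longleftrightarrow> (\<forall>a. v a = UU \<or> v a = w a)"

definition completions :: "'a set \<Rightarrow> ('a \<Rightarrow> tv) \<Rightarrow> ('a \<Rightarrow> tv) set" where
  "completions A v = {w. two_valued A w \<and> leq_i v w}"

definition consensus :: "tv set \<Rightarrow> tv" where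
  "consensus S = (if S \<subseteq> {TT} then TT else if S \<subseteq> {FF} then FF else UU)"

definition is_adf :: "'a set \<Rightarrow> ('a \<times> 'a) set \<Rightarrow> ('a \<Rightarrow> 'a form) \<Rightarrow> bool" where
  "is_adf A L phi \<longleftrightarrow> L \<subseteq> A \<times> A \<and> (\<forall>a\<in>A. atoms (phi a) \<subseteq> {b. (b, a) \<in> L})"

definition Gamma :: "'a set \<Rightarrow> ('a \<Rightarrow> 'a form) \<Rightarrow> ('a \<Rightarrow> tv) \<Rightarrow> ('a \<Rightarrow> tv)" where
  "Gamma A phi v = (\<lambda>a. if a \<in> A then consensus {eval w (phi a) | w. w \<in> completions A v} else UU)"

definition admissible :: "'a set \<Rightarrow> ('a \<Rightarrow> 'a form) \<Rightarrow> ('a \<Rightarrow> tv) \<Rightarrow> bool" where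
  "admissible A phi v \<longleftrightarrow> interp A v \<and> leq_i v (Gamma A phi v)"

definition preferred :: "'a set \<Rightarrow> ('a \<Rightarrow> 'a form) \<Rightarrow> ('a \<Rightarrow> tv) \<Rightarrow> bool" where
  "preferred A phi v \<longleftrightarrow> admissible A phi v \<and>
     (\<forall>u. admissible A phi u \<and> leq_i v u \<longrightarrow> u = v)"

definition two_valued_model :: "'a set \<Rightarrow> ('a \<Rightarrow> 'a form) \<Rightarrow> ('a \<Rightarrow> tv) \<Rightarrow> bool" where
  "two_valued_model A phi v \<longleftrightarrow> two_valued A v \<and> Gamma A phi v = v"

definition mod_adf :: "'a set \<Rightarrow> ('a \<Rightarrow> 'a form) \<Rightarrow> ('a \<Rightarrow> tv) set" where
  "mod_adf A phi = {v. two_valued_model A phi v}"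

definition prf_adf :: "'a set \<Rightarrow> ('a \<Rightarrow> 'a form) \<Rightarrow> ('a \<Rightarrow> tv) set" where
  "prf_adf A phi = {v. preferred A phi v}"

definition sig_mod :: "'a set \<Rightarrow> ('a \<Rightarrow> tv) set set" where
  "sig_mod A = {mod_adf A phi | L phi. is_adf A L phi}"

definition sig_prf :: "'a set \<Rightarrow> ('a \<Rightarrow> tv) set set" where
  "sig_prf A = {prf_adf A phi | L phi. is_adf A L phi}"

end

theory Submission
  imports Defs
begin

definition lit :: "('a \<Rightarrow> tv) \<Rightarrow> 'a \<Rightarrow> 'a form" where
  "lit v b = (if v b = TT then Atom b else Neg (Atom b))"

definition formv :: "'a list \<Rightarrow> ('a \<Rightarrow> tv) \<Rightarrow> 'a form" where
  "formv xs v = foldr (\<lambda>b f. Conj (lit v b) f) xs Top"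

definition chi :: "'a list \<Rightarrow> ('a \<Rightarrow> tv) list \<Rightarrow> 'a form" where
  "chi xs vs = foldr (\<lambda>v f. Disj (formv xs v) f) vs Bot"

definition phiV :: "'a set \<Rightarrow> 'a list \<Rightarrow> ('a \<Rightarrow> tv) list \<Rightarrow> 'a \<Rightarrow> 'a form" where
  "phiV A xs vs a = (if a \<in> A then Disj (Conj (chi xs vs) (Atom a)) (Conj (Neg (chi xs vs)) (Neg (Atom a))) else Top)"

lemma eval_lit:
  assumes "w b \<noteq> UU" "v b \<noteq> UU"
  shows "(eval w (lit v b) = TT) = (w b = v b)"
  using assms by (cases "w b"; cases "v b"; simp add: lit_def)

lemma eval_formv:
  assumes "\<forall>b\<in>set xs. w b \<noteq> UU \<and> v b \<noteq> UU"
  shows "(eval w (formv xs v) = TT) = (\<forall>b\<in>set xs. w b = v b)"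
  using assms
proof (induction xs)
  case Nil then show ?case by (simp add: formv_def)
next
  case (Cons b xs)
  then show ?case using eval_lit[of w b v] by (simp add: formv_def)
qed

lemma eval_chi:
  assumes "\<forall>v\<in>set vs. \<forall>b\<in>set xs. w b \<noteq> UU \<and> v b \<noteq> UU"
  shows "(eval w (chi xs vs) = TT) = (\<exists>v\<in>set vs. \<forall>b\<in>set xs. w b = v b)"
  using assms
proof (induction vs)
  case Nil then show ?case by (simp add: chi_def)
next
  case (Cons v vs)
  then show ?case using eval_formv[of xs w v] by (simp add: chi_def)
qed

lemma atoms_formv: "atoms (formv xs v) \<subseteq> set xs"
  by (induction xs) (auto simp: formv_def lit_def)

lemma atoms_chi: "atoms (chi xs vs) \<subseteq> set xs"
  using atoms_formv by (induction vs) (fastforce simp: chi_def)+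

lemma tv_univ: "(UNIV :: tv set) = {TT, FF, UU}"
  using tv.exhaust by blast

lemma two_valued_eq:
  assumes "two_valued A v" "two_valued A w" "\<forall>b\<in>A. w b = v b"
  shows "w = v"
  using assms by (auto simp: two_valued_def interp_def fun_eq_iff)

lemma completions_two_valued:
  assumes "two_valued A v"
  shows "completions A v = {v}"
  using assms unfolding completions_def two_valued_def leq_i_def interp_def
  by (auto simp: fun_eq_iff) (metis)

lemma consensus_single: "x \<noteq> UU \<Longrightarrow> consensus {x} = x"
  by (cases x) (auto simp: consensus_def)

context
  fixes A :: "'a set" and V :: "('a \<Rightarrow> tv) set" and xs vs
  assumes xs: "set xs = A" and vs: "set vs = V" and V2: "\<forall>v\<in>V. two_valued A v"
begin

lemma chi_iff:
  assumes "two_valued A w"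
  shows "(eval w (chi xs vs) = TT) = (w \<in> V)"
proof -
  have h: "\<forall>v\<in>set vs. \<forall>b\<in>set xs. w b \<noteq> UU \<and> v b \<noteq> UU"
    using assms V2 xs vs by (auto simp: two_valued_def)
  show ?thesis
    unfolding eval_chi[OF h] using two_valued_eq[OF _ assms] V2 xs vs by auto
qed

lemma eval_phi:
  assumes "two_valued A w" "a \<in> A"
  shows "eval w (phiV A xs vs a) = (if w \<in> V then w a else if w a = TT then FF else TT)"
proof -
  have "w a \<noteq> UU" using assms by (auto simp: two_valued_def)
  then show ?thesis using chi_iff[OF assms(1)] assms(2)
    by (cases "w a") (auto simp: phiV_def)
qed

lemma Gamma_two_valued:
  assumes "two_valued A v"
  shows "Gamma A (phiV A xs vs) v = (\<lambda>a. if a \<in> A then eval v (phiV A xs vs a) else UU)"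
proof -
  have *: "\<And>a. a \<in> A \<Longrightarrow> eval v (phiV A xs vs a) \<noteq> UU"
    using eval_phi[OF assms] assms by (auto simp: two_valued_def)
  show ?thesis
  proof -
    have "\<And>a. {eval w (phiV A xs vs a) | w. w \<in> {v}} = {eval v (phiV A xs vs a)}" by auto
    then show ?thesis
      unfolding Gamma_def completions_two_valued[OF assms] using * by (auto simp: fun_eq_iff consensus_single)
  qed
qed

lemma V_admissible:
  assumes "v \<in> V"
  shows "admissible A (phiV A xs vs) v"
proof -
  have tv: "two_valued A v" using V2 assms by auto
  have "Gamma A (phiV A xs vs) v = v"
    unfolding Gamma_two_valued[OF tv] using eval_phi[OF tv] assms tv
    by (auto simp: fun_eq_iff two_valued_def interp_def)
  then show ?thesis using tv by (simp add: admissible_def two_valued_def leq_i_def)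
qed

lemma V_preferred:
  assumes "v \<in> V"
  shows "preferred A (phiV A xs vs) v"
proof -
  have tv: "two_valued A v" using V2 assms by auto
  { fix u assume "admissible A (phiV A xs vs) u" "leq_i v u"
    then have "u = v" using tv
      by (auto simp: admissible_def leq_i_def two_valued_def interp_def fun_eq_iff) (metis) }
  then show ?thesis using V_admissible[OF assms] by (auto simp: preferred_def)
qed

lemma preferred_V:
  assumes "V \<noteq> {}" "preferred A (phiV A xs vs) u"
  shows "u \<in> V"
proof (cases "\<forall>a. u a = UU")
  case True
  obtain v where v: "v \<in> V" using assms(1) by auto
  have "leq_i u v" using True by (simp add: leq_i_def)
  then have "v = u" using assms(2) V_admissible[OF v] by (auto simp: preferred_def)
  then show ?thesis using v by simp
next
  case False
  then obtain a where ua: "u a \<noteq> UU" by auto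
  have adm: "admissible A (phiV A xs vs) u" using assms(2) by (simp add: preferred_def)
  then have iu: "interp A u" by (simp add: admissible_def)
  then have aA: "a \<in> A" using ua by (auto simp: interp_def)
  define w0 where "w0 = (\<lambda>b. if u b = UU then (if b \<in> A then TT else UU) else u b)"
  have tw0: "two_valued A w0" using iu by (auto simp: w0_def two_valued_def interp_def)
  have lw0: "leq_i u w0" by (auto simp: w0_def leq_i_def)
  have comp: "w0 \<in> completions A u" using tw0 lw0 by (simp add: completions_def)
  have G: "Gamma A (phiV A xs vs) u a = u a"
    using adm ua by (auto simp: admissible_def leq_i_def)
  let ?S = "{eval w (phiV A xs vs a) | w. w \<in> completions A u}"
  have w0a: "w0 a = u a" using ua by (simp add: w0_def)
  have "w0 \<in> V"
  proof (rule ccontr)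
    assume nV: "w0 \<notin> V"
    have e: "eval w0 (phiV A xs vs a) = (if u a = TT then FF else TT)"
      using eval_phi[OF tw0 aA] nV w0a by simp
    have inS: "eval w0 (phiV A xs vs a) \<in> ?S" using comp by blast
    have c: "consensus ?S = u a" using G aA by (simp add: Gamma_def)
    show False
    proof (cases "u a")
      case TT then show ?thesis using c e inS by (auto simp: consensus_def split: if_splits)
    next
      case FF then show ?thesis using c e inS by (auto simp: consensus_def split: if_splits)
    next
      case UU then show ?thesis using ua by simp
    qed
  qed
  then have "w0 = u" using assms(2) V_admissible lw0 by (auto simp: preferred_def)
  then show ?thesis using \<open>w0 \<in> V\<close> by simp
qed

end

theorem proposition7:
  fixes A :: "'a set"
  assumes "finite A"
  shows "sig_mod A - {{}} \<subseteq> sig_prf A"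
proof
  fix V assume "V \<in> sig_mod A - {{}}"
  then obtain L phi where V: "V = mod_adf A phi" and ne: "V \<noteq> {}"
    by (auto simp: sig_mod_def)
  have V2: "\<forall>v\<in>V. two_valued A v" using V by (simp add: mod_adf_def two_valued_model_def)
  have "V \<subseteq> {f. \<forall>x. (x \<in> A \<longrightarrow> f x \<in> UNIV) \<and> (x \<notin> A \<longrightarrow> f x = UU)}"
    using V2 by (auto simp: two_valued_def interp_def)
  moreover have "finite {f. \<forall>x. (x \<in> A \<longrightarrow> f x \<in> (UNIV::tv set)) \<and> (x \<notin> A \<longrightarrow> f x = UU)}"
    by (rule finite_set_of_finite_funs) (use assms in \<open>simp_all add: tv_univ\<close>)
  ultimately have "finite V" by (rule finite_subset)
  then obtain vs where vs: "set vs = V" using finite_list by blast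
  obtain xs where xs: "set xs = A" using assms finite_list by blast
  have adf: "is_adf A (A \<times> A) (phiV A xs vs)"
    using atoms_chi[of xs vs] xs by (auto simp: is_adf_def phiV_def)
  have "prf_adf A (phiV A xs vs) = V"
    using V_preferred[OF xs vs V2] preferred_V[OF xs vs V2 ne]
    by (auto simp: prf_adf_def)
  then show "V \<in> sig_prf A" using adf unfolding sig_prf_def by blast
qed

end
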